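(* Let $\xi$ be a model with $\xi(1)=1$ which is not of the form $\xi(t)=at^2$. Then $\xi$ has non-negative replicon eigenvalue and is pure-like or critical if and only if $$\frac{\xi''(1)}{\xi'(1)}\le y_\xi\le\frac{\xi'(1)}{\xi''(0)}.$$
   Context: A model is $\xi(t)=\sum_{p\ge2}\beta_p^2t^p$, real $\beta_p$ not all zero, with $\xi(1+\epsilon)<\infty$ for some $\epsilon>0$. For $\xi$ not of the form $at^2$, $y_\xi$ is the unique $y\in(1,\infty)$ with $\frac{\xi(1)}{\xi'(1)}=\frac1{y-1}\big(\frac{y}{y-1}\log y-1\big)$; the convention $\xi'(1)/0=+\infty$ is used if $\xi''(0)=0$. The system $\xi(1)=\frac1m(\frac1m\log\frac{c+m}c-\frac1{c+m})$, $\frac1{\xi'(1)}=c(c+m)$ has a unique solution $m,c>0$; with $\phi(t)=m(1-t)+c$ and formal conjugate $\eta(t)=\xi(1)-\int_t^1\int_0^s\phi^{-2}d\tau ds$, the replicon eigenvalue is $\eta''(0)-\xi''(0)$. With $\nu'=\xi'(1),\nu''=\xi''(1)$, $ABA=\log(\nu''/\nu')-\frac{(\nu''-\nu')(\nu''-\nu'+\nu'^2)}{\nu''\nu'^2}$; pure-like means $ABA>0$, critical means $ABA=0$. *)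

theory Defs
  imports "HOL-Analysis.Analysis"
begin

definition is_model :: "(nat \<Rightarrow> real) \<Rightarrow> bool" where
  "is_model beta \<longleftrightarrow> (\<exists>p\<ge>2. beta p \<noteq> 0) \<and>
     (\<exists>\<epsilon>>0. summable (\<lambda>p. (if 2 \<le> p then (beta p)^2 * (1 + \<epsilon>)^p else 0)))"

definition xi :: "(nat \<Rightarrow> real) \<Rightarrow> real \<Rightarrow> real" where
  "xi beta t = (\<Sum>p. (if 2 \<le> p then (beta p)^2 * t^p else 0))"

definition xi1 :: "(nat \<Rightarrow> real) \<Rightarrow> real \<Rightarrow> real" where
  "xi1 beta = deriv (xi beta)"

definition xi2 :: "(nat \<Rightarrow> real) \<Rightarrow> real \<Rightarrow> real" where
  "xi2 beta = deriv (deriv (xi beta))"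

definition y_xi :: "(nat \<Rightarrow> real) \<Rightarrow> real" where
  "y_xi beta = (THE y. 1 < y \<and>
      xi beta 1 / xi1 beta 1 = (1 / (y - 1)) * ((y / (y - 1)) * ln y - 1))"

definition mc :: "(nat \<Rightarrow> real) \<Rightarrow> real \<times> real" where
  "mc beta = (THE (m, c). 0 < m \<and> 0 < c \<and>
      xi beta 1 = (1 / m) * ((1 / m) * ln ((c + m) / c) - 1 / (c + m)) \<and>
      1 / xi1 beta 1 = c * (c + m))"

definition phi :: "(nat \<Rightarrow> real) \<Rightarrow> real \<Rightarrow> real" where
  "phi beta t = fst (mc beta) * (1 - t) + snd (mc beta)"

definition eta :: "(nat \<Rightarrow> real) \<Rightarrow> real \<Rightarrow> real" where
  "eta beta t = xi beta 1 -
     (LBINT s=t..1. (LBINT \<tau>=0..s. 1 / (phi beta \<tau>)^2))"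

definition replicon :: "(nat \<Rightarrow> real) \<Rightarrow> real" where
  "replicon beta = deriv (deriv (eta beta)) 0 - xi2 beta 0"

definition ABA :: "(nat \<Rightarrow> real) \<Rightarrow> real" where
  "ABA beta = (let n1 = xi1 beta 1; n2 = xi2 beta 1 in
     ln (n2 / n1) - ((n2 - n1) * (n2 - n1 + n1^2)) / (n2 * n1^2))"

definition pure_like :: "(nat \<Rightarrow> real) \<Rightarrow> bool" where
  "pure_like beta \<longleftrightarrow> ABA beta > 0"

definition critical :: "(nat \<Rightarrow> real) \<Rightarrow> bool" where
  "critical beta \<longleftrightarrow> ABA beta = 0"

end

theory Submission
  imports Defs "HOL-Real_Asymp.Real_Asymp"
begin

definition fy :: "real \<Rightarrow> real" where
  "fy y = (1 / (y - 1)) * ((y / (y - 1)) * ln y - 1)"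

lemma fy_lim1: "(fy \<longlongrightarrow> 1/2) (at_right 1)"
  unfolding fy_def by real_asymp
lemma fy_lim2: "(fy \<longlongrightarrow> 0) at_top"
  unfolding fy_def by real_asymp

lemma g_pos: assumes "(1::real) < y" shows "2*(y-1)/(y+1) < ln y"
proof -
  define g where "g x = ln x - 2*(x-1)/(x+1)" for x :: real
  have d: "DERIV g x :> (1/x - 4/(x+1)^2)" if "x \<ge> 1" for x
    unfolding g_def using that
    by (auto intro!: derivative_eq_intros simp: power2_eq_square field_simps)
  obtain z where z: "1 < z" "z < y" "g y - g 1 = (y - 1) * (1/z - 4/(z+1)^2)"
    using MVT2[of 1 y g "\<lambda>x. 1/x - 4/(x+1)^2"] assms d by auto
  have "1/z - 4/(z+1)^2 = (z-1)^2/(z*(z+1)^2)" using z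
    by (simp add: divide_simps power2_eq_square) (simp add: algebra_simps)
  also have "\<dots> > 0" using z by (auto intro!: divide_pos_pos)
  finally have "g y > g 1" using z assms by (smt (verit) mult_pos_pos)
  then show ?thesis unfolding g_def by simp
qed

lemma fy_dec: assumes "1 < a" "a < b" shows "fy b < fy a"
proof -
  have "\<exists>d. DERIV fy x :> d \<and> d < 0" if "a \<le> x" "x \<le> b" for x
  proof -
    have x: "x > 1" using that assms by simp
    have "DERIV fy x :> (2*(x-1) - (x+1)*ln x)/(x-1)^3"
    proof -
      have d1: "DERIV (\<lambda>y. 1/(y-1)) x :> -1/(x-1)^2" using x
        by (auto intro!: derivative_eq_intros simp: power2_eq_square field_simps)
      have d2: "DERIV (\<lambda>y. y/(y-1)) x :> -1/(x-1)^2" using x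
        by (auto intro!: derivative_eq_intros simp: power2_eq_square field_simps)
      have d3: "DERIV ln x :> 1/x" using x by (auto intro!: derivative_eq_intros)
      have d4: "DERIV (\<lambda>y. y/(y-1) * ln y - 1) x :> (-1/(x-1)^2) * ln x + 1/x * (x/(x-1))"
        using DERIV_diff[OF DERIV_mult[OF d2 d3] DERIV_const[of 1]] by simp
      note d5 = DERIV_mult[OF d1 d4]
      show ?thesis unfolding fy_def
        apply (rule DERIV_cong[OF d5])
        using x apply (simp add: divide_simps power2_eq_square power3_eq_cube)
        apply (simp add: algebra_simps)
        done
    qed

    moreover have "(2*(x-1) - (x+1)*ln x)/(x-1)^3 < 0"
      using g_pos[OF x] x by (intro divide_neg_pos) (auto simp: field_simps)
    ultimately show ?thesis by blast
  qed
  from DERIV_neg_imp_decreasing[OF assms(2) this] show ?thesis by blast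
qed

lemma fy_cont: "1 < x \<Longrightarrow> isCont fy x"
  unfolding fy_def by (intro continuous_intros) auto

lemma fy_exists: assumes "0 < k" "k < 1/2" shows "\<exists>y>1. fy y = k"
proof -
  have "\<forall>\<^sub>F y in at_right 1. k < fy y" using order_tendstoD(1)[OF fy_lim1] assms by simp
  then obtain b where b: "b > 1" "\<And>y. y > 1 \<Longrightarrow> y < b \<Longrightarrow> k < fy y"
    unfolding eventually_at_right_field by blast
  define a where "a = (1+b)/2"
  have a: "1 < a" "k < fy a" using b unfolding a_def by auto
  have "\<forall>\<^sub>F y in at_top. fy y < k" using order_tendstoD(2)[OF fy_lim2] assms by simp
  then obtain N where N: "\<And>y. y \<ge> N \<Longrightarrow> fy y < k" unfolding eventually_at_top_linorder by blast
  define c where "c = max N (a+1)"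
  have c: "a \<le> c" "fy c < k" using N unfolding c_def by auto
  obtain y where "a \<le> y" "y \<le> c" "fy y = k"
    using IVT2[of fy c k a] c a fy_cont by force
  then show ?thesis using a by (intro exI[of _ y]) auto
qed


lemma eta_dd:
  fixes m c A :: real
  assumes m: "m > 0" and c: "c > 0"
  shows "deriv (deriv (\<lambda>t. A - (LBINT s=t..1. (LBINT \<tau>=0..s. 1 / (m * (1 - \<tau>) + c)^2)))) 0
         = 1 / (m + c)^2"
proof -
  define ph where "ph \<tau> = m * (1 - \<tau>) + c" for \<tau>
  define H where "H s = 1 / (m * ph s)" for s
  define K where "K s = - ln (ph s) / m^2" for s
  have php: "ph x > 0" if "x \<le> 1" for x unfolding ph_def using that m c
    by (smt (verit) mult_nonneg_nonneg)
  have dph: "(ph has_real_derivative -m) (at x)" for x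
    unfolding ph_def by (auto intro!: derivative_eq_intros)
  have dH: "(H has_real_derivative 1 / (ph x)^2) (at x)" if "x \<le> 1" for x
  proof -
    have "((\<lambda>s. inverse (m * ph s)) has_real_derivative - (inverse (m * ph x) * (m * -m) * inverse (m * ph x))) (at x)"
      using php[OF that] m DERIV_cmult[OF dph[of x], of m] by (intro derivative_intros) auto
    moreover have "- (inverse (m * ph x) * (m * -m) * inverse (m * ph x)) = 1 / (ph x)^2"
      using php[OF that] m by (simp add: field_simps power2_eq_square)
    ultimately show ?thesis unfolding H_def by (simp add: divide_inverse)
  qed
  have dK: "(K has_real_derivative H x) (at x)" if "x \<le> 1" for x
  proof -
    have "((\<lambda>s. - ln (ph s) / m^2) has_real_derivative - (inverse (ph x) * (-m)) / m^2) (at x)"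
      using DERIV_cdivide[OF DERIV_minus[OF DERIV_chain2[OF DERIV_ln[OF php[OF that]] dph[of x]]], of "m^2"]
      by simp
    moreover have "- (inverse (ph x) * (-m)) / m^2 = H x"
      using php[OF that] m unfolding H_def by (simp add: field_simps power2_eq_square)
    ultimately show ?thesis unfolding K_def by simp
  qed
  have inner: "(LBINT \<tau>=0..s. 1 / (ph \<tau>)^2) = H s - H 0" if "s \<le> 1" for s
    unfolding zero_ereal_def
  proof (rule interval_integral_FTC_finite)
    show "continuous_on {min 0 s..max 0 s} (\<lambda>\<tau>. 1 / (ph \<tau>)^2)"
      unfolding ph_def using php that
      by (intro continuous_intros) (auto simp: ph_def, smt (verit))
    fix x assume "min 0 s \<le> x" "x \<le> max 0 s"
    then have "x \<le> 1" using that by auto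
    then show "(H has_vector_derivative 1 / (ph x)^2) (at x within {min 0 s..max 0 s})"
      using dH has_real_derivative_iff_has_vector_derivative
      by (metis has_vector_derivative_at_within)
  qed
  have outer: "(LBINT s=t..1. (LBINT \<tau>=0..s. 1 / (ph \<tau>)^2)) = (K 1 - H 0 * 1) - (K t - H 0 * t)"
    if "t \<le> 1" for t
  proof -
    have "(LBINT s=t..1. (LBINT \<tau>=0..s. 1 / (ph \<tau>)^2)) = (LBINT s=t..ereal 1. H s - H 0)"
      unfolding one_ereal_def
      using that by (intro interval_integral_cong) (auto intro!: inner simp: einterval_def)
    also have "\<dots> = (K 1 - H 0 * 1) - (K t - H 0 * t)"
    proof (rule interval_integral_FTC_finite)
      show "continuous_on {min t 1..max t 1} (\<lambda>s. H s - H 0)"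
        unfolding H_def ph_def using php that m
        by (intro continuous_intros) (auto simp: ph_def, smt (verit) mult_pos_pos)
      fix x assume "min t 1 \<le> x" "x \<le> max t 1"
      then have "x \<le> 1" using that by auto
      have "((\<lambda>s. K s - H 0 * s) has_real_derivative H x - H 0 * 1) (at x)"
        using DERIV_diff[OF dK[OF \<open>x \<le> 1\<close>] DERIV_cmult[OF DERIV_ident, of "H 0"]] by simp
      then show "((\<lambda>s. K s - H 0 * s) has_vector_derivative H x - H 0) (at x within {min t 1..max t 1})"
        using has_real_derivative_iff_has_vector_derivative
        by (metis has_vector_derivative_at_within mult_1_right)
    qed
    finally show ?thesis .
  qed
  define E where "E t = A - (LBINT s=t..1. (LBINT \<tau>=0..s. 1 / (ph \<tau>)^2))" for t :: real
  define U where "U = {-1<..<1::real}"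
  have oU: "open U" and U0: "0 \<in> U" unfolding U_def by auto
  have EU: "E t = A - (K 1 - H 0) + K t - H 0 * t" if "t \<in> U" for t
    using outer[of t] that unfolding E_def U_def by auto
  have dE: "(E has_real_derivative H t - H 0) (at t)" if "t \<in> U" for t
  proof -
    have "t \<le> 1" using that unfolding U_def by auto
    have "((\<lambda>t. A - (K 1 - H 0) + K t - H 0 * t) has_real_derivative 0 + H t - H 0 * 1) (at t)"
      using DERIV_diff[OF DERIV_add[OF DERIV_const dK[OF \<open>t \<le> 1\<close>]] DERIV_cmult[OF DERIV_ident, of "H 0"]] by simp
    then have "((\<lambda>t. A - (K 1 - H 0) + K t - H 0 * t) has_real_derivative H t - H 0) (at t)" by simp
    then show ?thesis
      by (rule has_field_derivative_transform_within_open[OF _ oU that]) (simp add: EU)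
  qed
  have dE': "deriv E t = H t - H 0" if "t \<in> U" for t using dE[OF that] by (rule DERIV_imp_deriv)
  have "((\<lambda>t. H t - H 0) has_real_derivative 1 / (ph 0)^2 - 0) (at 0)"
    by (intro derivative_intros dH) simp
  then have "((\<lambda>t. H t - H 0) has_real_derivative 1 / (ph 0)^2) (at 0)" by simp
  then have "(deriv E has_real_derivative 1 / (ph 0)^2) (at 0)"
    by (rule has_field_derivative_transform_within_open[OF _ oU U0]) (simp add: dE')
  then have "deriv (deriv E) 0 = 1 / (ph 0)^2" by (rule DERIV_imp_deriv)
  then show ?thesis unfolding E_def ph_def by (simp add: add.commute)
qed


lemma xi_facts:
  fixes beta :: "nat \<Rightarrow> real"
  assumes model: "is_model beta" and x1: "xi beta 1 = 1"
    and nq: "\<not> (\<exists>a. \<forall>t\<in>{0..1}. xi beta t = a * t^2)"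
  shows "xi1 beta 1 > 2" "xi2 beta 1 > xi1 beta 1" "xi2 beta 0 = 2 * (beta 2)^2"
proof -
  define c where "c p = (if 2 \<le> p then (beta p)^2 else 0)" for p
  obtain \<epsilon> where \<epsilon>: "\<epsilon> > 0" and smK0: "summable (\<lambda>p. (if 2 \<le> p then (beta p)^2 * (1 + \<epsilon>)^p else 0))"
    using model unfolding is_model_def by blast
  define K where "K = 1 + \<epsilon>"
  have K1: "K > 1" unfolding K_def using \<epsilon> by simp
  have smK: "summable (\<lambda>p. c p * K^p)"
  proof -
    have "(\<lambda>p. c p * K^p) = (\<lambda>p. (if 2 \<le> p then (beta p)^2 * (1 + \<epsilon>)^p else 0))"
      unfolding K_def c_def by (rule ext) simp
    then show ?thesis using smK0 by simp
  qed
  have xieq: "xi beta = (\<lambda>t. \<Sum>p. c p * t^p)"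
    unfolding xi_def c_def by (intro ext suminf_cong) simp
  have sm0: "summable (\<lambda>n. c n * t^n)" if "\<bar>t\<bar> < K" for t
    using powser_inside[OF smK] that K1 by simp
  have sm1: "summable (\<lambda>n. diffs c n * t^n)" if "\<bar>t\<bar> < K" for t
    using termdiff_converges[of t K c] sm0 that by simp
  have sm2: "summable (\<lambda>n. diffs (diffs c) n * t^n)" if "\<bar>t\<bar> < K" for t
    using termdiff_converges[of t K "diffs c"] sm1 that by simp
  define U where "U = {-K<..<K}"
  have oU: "open U" unfolding U_def by simp
  have d0: "(xi beta has_real_derivative (\<Sum>n. diffs c n * t^n)) (at t)" if "t \<in> U" for t
    unfolding xieq using termdiffs_strong[OF smK, of t] that K1 unfolding U_def by auto
  have d1eq: "deriv (xi beta) t = (\<Sum>n. diffs c n * t^n)" if "t \<in> U" for t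
    using d0[OF that] by (rule DERIV_imp_deriv)
  have d1: "(deriv (xi beta) has_real_derivative (\<Sum>n. diffs (diffs c) n * t^n)) (at t)" if "t \<in> U" for t
  proof -
    define K' where "K' = (\<bar>t\<bar> + K) / 2"
    have "\<bar>t\<bar> < K" using that unfolding U_def by auto
    then have K': "\<bar>t\<bar> < K'" "\<bar>K'\<bar> < K" unfolding K'_def by auto
    have "((\<lambda>t. \<Sum>n. diffs c n * t^n) has_real_derivative (\<Sum>n. diffs (diffs c) n * t^n)) (at t)"
      using termdiffs_strong[OF sm1[OF K'(2)], of t] K' by auto
    then show ?thesis
      by (rule has_field_derivative_transform_within_open[OF _ oU that]) (simp add: d1eq)
  qed
  have U1: "1 \<in> U" and U0: "0 \<in> U" unfolding U_def using K1 by auto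
  have v1: "xi1 beta 1 = (\<Sum>n. diffs c n)"
    unfolding xi1_def using d1eq[OF U1] by simp
  have v2: "xi2 beta 1 = (\<Sum>n. diffs (diffs c) n)"
    unfolding xi2_def using DERIV_imp_deriv[OF d1[OF U1]] by simp
  have v20: "xi2 beta 0 = diffs (diffs c) 0"
    unfolding xi2_def using DERIV_imp_deriv[OF d1[OF U0]] by simp
  show "xi2 beta 0 = 2 * (beta 2)^2" unfolding v20 by (simp add: diffs_def c_def numeral_2_eq_2)
  define a where "a i = c (i + 2)" for i
  have a0: "a i \<ge> 0" for i unfolding a_def c_def by simp
  have s0: "c sums 1"
  proof -
    have "summable c" using sm0[of 1] K1 by simp
    then have "c sums (\<Sum>p. c p)" by (rule summable_sums)
    moreover have "(\<Sum>p. c p) = 1" using x1 unfolding xieq by simp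
    ultimately show ?thesis by simp
  qed
  have sa: "a sums 1"
    using s0 sums_iff_shift[of c 2 1] unfolding a_def by (simp add: c_def numeral_2_eq_2)
  have s1: "diffs c sums xi1 beta 1"
  proof -
    have "summable (diffs c)" using sm1[of 1] K1 by simp
    then show ?thesis unfolding v1 by (rule summable_sums)
  qed
  have sa1: "(\<lambda>i. (real i + 2) * a i) sums xi1 beta 1"
  proof -
    have "(\<lambda>i. diffs c (i + 1)) sums xi1 beta 1"
      using s1 sums_iff_shift[of "diffs c" 1 "xi1 beta 1"] by (simp add: diffs_def c_def)
    then show ?thesis unfolding a_def diffs_def by (simp add: add.commute)
  qed
  have s2: "diffs (diffs c) sums xi2 beta 1"
  proof -
    have "summable (diffs (diffs c))" using sm2[of 1] K1 by simp
    then show ?thesis unfolding v2 by (rule summable_sums)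
  qed
  have sa2: "(\<lambda>i. (real i + 1) * (real i + 2) * a i) sums xi2 beta 1"
    using s2 unfolding a_def diffs_def by (simp add: add.commute mult.assoc)
  obtain j where j: "j \<ge> 1" "a j > 0"
  proof (rule ccontr)
    assume "\<not> thesis"
    with that have z: "a j = 0" if "j \<ge> 1" for j using that a0[of j] by force
    have "xi beta t = c 2 * t^2" for t
    proof -
      have "xi beta t = (\<Sum>p\<in>{2}. c p * t^p)"
        unfolding xieq
      proof (rule suminf_finite)
        fix p :: nat assume "p \<notin> {2}"
        then consider "p < 2" | "p \<ge> 3" by force
        then show "c p * t^p = 0"
        proof cases
          case 1 then show ?thesis by (simp add: c_def)
        next
          case 2 then have "a (p - 2) = 0" using z by simp
          moreover have "p - 2 + 2 = p" using 2 by simp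
          ultimately show ?thesis unfolding a_def by (metis mult_zero_left)
        qed
      qed simp
      then show ?thesis by simp
    qed
    then show False using nq by blast
  qed
  have "(\<lambda>i. (real i + 2) * a i - 2 * a i) sums (xi1 beta 1 - 2 * 1)"
    by (intro sums_diff sa1 sums_mult sa)
  then have sd1: "(\<lambda>i. real i * a i) sums (xi1 beta 1 - 2)" by (simp add: algebra_simps)
  have "0 < (\<Sum>i. real i * a i)"
    using j a0 by (intro suminf_pos2[OF sums_summable[OF sd1], of j]) auto
  then show "xi1 beta 1 > 2" using sums_unique[OF sd1] by simp
  have "(\<lambda>i. (real i + 1) * (real i + 2) * a i - (real i + 2) * a i) sums (xi2 beta 1 - xi1 beta 1)"
    by (intro sums_diff sa1 sa2)
  then have sd2: "(\<lambda>i. real i * (real i + 2) * a i) sums (xi2 beta 1 - xi1 beta 1)" by (simp add: algebra_simps)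
  have "0 < (\<Sum>i. real i * (real i + 2) * a i)"
    using j a0 by (intro suminf_pos2[OF sums_summable[OF sd2], of j]) auto
  then show "xi2 beta 1 > xi1 beta 1" using sums_unique[OF sd2] by simp
qed



lemma R_eq0:
  fixes m c L :: real assumes "m > 0" "c > 0"
  shows "(1 / m) * ((1 / m) * L - 1 / (c + m))
     = (1 / ((c + m) / c - 1)) * (((c + m) / c / ((c + m) / c - 1)) * L - 1) / (c * (c + m))"
proof -
  have a: "(c + m) / c - 1 = m / c" using assms by (simp add: field_simps)
  have b: "(c + m) / c / (m / c) = (c + m) / m" using assms by (simp add: field_simps)
  have cm: "c + m \<noteq> 0" using assms by simp
  show ?thesis unfolding a b using assms cm by (simp add: divide_simps)
qed

lemma R_eq:
  fixes m c :: real assumes "m > 0" "c > 0"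
  shows "(1 / m) * ((1 / m) * ln ((c + m) / c) - 1 / (c + m)) = fy ((c + m) / c) / (c * (c + m))"
  unfolding fy_def by (rule R_eq0[OF assms])

lemma ABA_eq0:
  fixes n1 n2 L :: real assumes "n1 > 0" "n2 > 0" "n2 \<noteq> n1"
  shows "L - ((n2 - n1) * (n2 - n1 + n1^2)) / (n2 * n1^2)
       = (n2 - n1)^2 / (n1 * n2) * ((1 / (n2 / n1 - 1)) * ((n2 / n1 / (n2 / n1 - 1)) * L - 1) - 1 / n1)"
proof -
  have d: "n2 - n1 \<noteq> 0" using assms by simp
  have a: "n2 / n1 - 1 = (n2 - n1) / n1" using assms by (simp add: field_simps)
  have b: "n2 / n1 / ((n2 - n1) / n1) = n2 / (n2 - n1)" using assms d by (simp add: field_simps)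
  show ?thesis unfolding a b using assms d by (simp add: divide_simps power2_eq_square) (simp add: algebra_simps)
qed

lemma ABA_eq:
  fixes n1 n2 :: real assumes "n1 > 0" "n2 > 0" "n2 \<noteq> n1"
  shows "ln (n2 / n1) - ((n2 - n1) * (n2 - n1 + n1^2)) / (n2 * n1^2)
       = (n2 - n1)^2 / (n1 * n2) * (fy (n2 / n1) - 1 / n1)"
  unfolding fy_def by (rule ABA_eq0[OF assms])

theorem lemma5p6:
  fixes beta :: "nat \<Rightarrow> real"
  assumes "is_model beta"
    and "xi beta 1 = 1"
    and "\<not> (\<exists>a. \<forall>t\<in>{0..1}. xi beta t = a * t^2)"
  shows "(replicon beta \<ge> 0 \<and> (pure_like beta \<or> critical beta)) \<longleftrightarrow>
         (xi2 beta 1 / xi1 beta 1 \<le> y_xi beta \<and>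
          (xi2 beta 0 = 0 \<or> y_xi beta \<le> xi1 beta 1 / xi2 beta 0))"
proof -
  note F = xi_facts[OF assms]
  define n1 where "n1 = xi1 beta 1"
  define n2 where "n2 = xi2 beta 1"
  define s where "s = xi2 beta 0"
  have n1: "n1 > 2" and n21: "n2 > n1" and s0: "s \<ge> 0"
    using F unfolding n1_def n2_def s_def by auto
  define k where "k = 1 / n1"
  have k: "0 < k" "k < 1/2" unfolding k_def using n1 by (auto simp: field_simps)
  have xk: "xi beta 1 / xi1 beta 1 = k" using assms(2) unfolding k_def n1_def by simp
  have uniq: "y1 = y2" if "1 < y1" "fy y1 = k" "1 < y2" "fy y2 = k" for y1 y2
    using fy_dec[of y1 y2] fy_dec[of y2 y1] that by (cases y1 y2 rule: linorder_cases) auto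
  define Y where "Y = y_xi beta"
  obtain y0 where y0: "1 < y0" "fy y0 = k" using fy_exists[OF k] by blast
  have ex1: "\<exists>!y. 1 < y \<and> xi beta 1 / xi1 beta 1 = (1 / (y - 1)) * ((y / (y - 1)) * ln y - 1)"
    unfolding xk fy_def[symmetric] using y0 uniq by (intro ex1I[of _ y0]) auto
  have Y: "1 < Y" "fy Y = k"
    using theI'[OF ex1] unfolding Y_def y_xi_def xk fy_def[symmetric] by auto
  have Yu: "y = Y" if "1 < y" "fy y = k" for y using uniq[OF that Y] .
  define c0 where "c0 = sqrt (k / Y)"
  define m0 where "m0 = c0 * (Y - 1)"
  have c0: "c0 > 0" unfolding c0_def using k Y by simp
  have m0: "m0 > 0" unfolding m0_def using c0 Y by simp
  have c0sq: "c0^2 = k / Y" unfolding c0_def using k Y by simp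
  have y_c0: "(c0 + m0) / c0 = Y" unfolding m0_def using c0 by (simp add: field_simps)
  have cc0: "c0 * (c0 + m0) = k"
  proof -
    have "c0 * (c0 + m0) = c0^2 * Y" unfolding m0_def by (simp add: algebra_simps power2_eq_square)
    then show ?thesis using c0sq Y by simp
  qed
  define Q where "Q = (\<lambda>(m, c). 0 < m \<and> 0 < c \<and>
      xi beta 1 = (1 / m) * ((1 / m) * ln ((c + m) / c) - 1 / (c + m)) \<and>
      1 / xi1 beta 1 = c * (c + m))"
  have Q0: "Q (m0, c0)"
    unfolding Q_def using m0 c0 R_eq[OF m0 c0] y_c0 cc0 Y assms(2) k
    by (simp add: k_def n1_def)
  have Qu: "p = (m0, c0)" if "Q p" for p
  proof -
    obtain m c where p: "p = (m, c)" by fastforce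
    have mc: "0 < m" "0 < c" "1 = (1 / m) * ((1 / m) * ln ((c + m) / c) - 1 / (c + m))"
      "k = c * (c + m)"
      using that assms(2) unfolding p Q_def k_def n1_def by auto
    have e: "fy ((c + m) / c) / (c * (c + m)) = 1" using mc(3) R_eq[OF mc(1,2)] by metis
    have "c * (c + m) > 0" using mc by simp
    then have "fy ((c + m) / c) = c * (c + m)" using e mc(1,2) by (simp add: divide_eq_eq)
    then have "fy ((c + m) / c) = k" using mc(4) by simp
    moreover have "1 < (c + m) / c" using mc by simp
    ultimately have yY: "(c + m) / c = Y" using Yu by blast
    then have mY: "m = c * (Y - 1)" using mc by (simp add: field_simps)
    have "c^2 * Y = k" using mc(4) mY by (simp add: algebra_simps power2_eq_square)
    then have "c^2 = k / Y" using Y by (simp add: field_simps)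
    then have "c = c0" unfolding c0_def using mc by (simp add: real_sqrt_unique)
    then show ?thesis using p mY m0_def by simp
  qed
  have mceq: "mc beta = (m0, c0)"
  proof -
    have ex: "\<exists>!p. Q p" using Q0 Qu by blast
    show ?thesis using the1_equality[OF ex Q0] unfolding mc_def Q_def .
  qed
  have etaeq: "eta beta = (\<lambda>t. 1 - (LBINT s=t..1. (LBINT \<tau>=0..s. 1 / (m0 * (1 - \<tau>) + c0)^2)))"
    by (rule ext) (simp only: eta_def phi_def mceq assms(2) fst_conv snd_conv)
  have "deriv (deriv (eta beta)) 0 = 1 / (m0 + c0)^2"
    unfolding etaeq by (rule eta_dd[OF m0 c0])
  also have "(m0 + c0)^2 = k * Y"
  proof -
    have "m0 + c0 = c0 * Y" unfolding m0_def by (simp add: algebra_simps)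
    then have "(m0 + c0)^2 = c0^2 * Y^2" by (simp add: power_mult_distrib)
    then show ?thesis using c0sq Y by (simp add: power2_eq_square)
  qed
  finally have rep: "replicon beta = n1 / Y - s"
    unfolding replicon_def s_def k_def using n1 by simp
  have aba: "ABA beta = (n2 - n1)^2 / (n1 * n2) * (fy (n2 / n1) - k)"
    unfolding ABA_def Let_def n1_def[symmetric] n2_def[symmetric] k_def
    using ABA_eq[of n1 n2] n1 n21 by simp
  define P where "P = (n2 - n1)^2 / (n1 * n2)"
  have pos: "P > 0" unfolding P_def using n1 n21 by simp
  have "(pure_like beta \<or> critical beta) \<longleftrightarrow> ABA beta \<ge> 0"
    unfolding pure_like_def critical_def by auto
  also have "\<dots> \<longleftrightarrow> fy (n2 / n1) \<ge> k"
    unfolding aba P_def[symmetric] using pos by (simp add: zero_le_mult_iff)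
  also have "\<dots> \<longleftrightarrow> n2 / n1 \<le> Y"
  proof -
    have r1: "n2 / n1 > 1" using n1 n21 by simp
    show ?thesis
      using fy_dec[OF r1, of Y] fy_dec[OF Y(1), of "n2 / n1"] Y r1
      by (cases "n2 / n1" Y rule: linorder_cases) auto
  qed
  finally have P1: "(pure_like beta \<or> critical beta) \<longleftrightarrow> n2 / n1 \<le> Y" .
  have P2: "replicon beta \<ge> 0 \<longleftrightarrow> (s = 0 \<or> Y \<le> n1 / s)"
  proof (cases "s = 0")
    case True then show ?thesis unfolding rep using n1 Y by simp
  next
    case False
    then have "s > 0" using s0 by simp
    then show ?thesis unfolding rep using n1 Y False
      by (simp add: field_simps)
  qed
  show ?thesis using P1 P2 unfolding n1_def n2_def s_def Y_def by blast
qed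

end
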